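(* Let $W_0\in\mathcal{W}$ and let $S(W)\in\mathbb{R}^{|I||J|}$ be the global similarity vector obtained by stacking $S_1(W),\dots,S_{|I|}(W)$. Put $s_0=S(W_0)$, $s_{0i}=S_i(W_0)$, $s_{0i,j}=(S_i(W_0))_j$. Then the Jacobian $S_0=dS_{W_0}\in\mathbb{R}^{|I||J|\times|I||J|}$ of $S$ at $W_0$ is the block matrix $(A_{ik}(W_0))_{i,k\in I}$ with $|J|\times|J|$ blocks given, for $V_k\in T_0$, by $$A_{ik}(W_0)(V_k)=\begin{cases}w_{ik}\,\Pi_{s_{0i}}\Big(\frac{V_k}{W_{0k}}\Big), & k\in\mathcal{N}_i,\\ 0,& k\notin\mathcal{N}_i,\end{cases}$$ and for $k\in\mathcal{N}_i$ the entries are, for $j,l\in J$, $$\big(A_{ik}(W_0)\big)_{jl}=w_{ik}\begin{cases}(1-s_{0i,j})\dfrac{s_{0i,j}}{W_{0k,j}}, & j=l,\\[2mm] -s_{0i,j}\dfrac{s_{0i,l}}{W_{0k,l}}, & j\neq l.\end{cases}$$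
   Context: Let $G=(I,E)$ be a finite undirected graph with neighborhoods $\mathcal{N}_i=\{k\in I: ik\in E\}$, and weights $w_{ik}>0$ with $\sum_{k\in\mathcal{N}_i}w_{ik}=1$. Let $J$ be a finite label set. Operations on vectors are componentwise. $\mathcal{S}=\{p\in\mathbb{R}^{|J|}: p_j>0,\ \langle\mathbb{1},p\rangle=1\}$, $T_0=\{v:\langle\mathbb{1},v\rangle=0\}$. For $p\in\mathcal{S}$, $\Pi_p(z)=(\mathrm{Diag}(p)-pp^\top)z$ and $\exp_p(z)=\frac{p\,e^{z}}{\langle p,e^{z}\rangle}$ for $z\in\mathbb{R}^{|J|}$. $\mathcal{W}=\mathcal{S}^{|I|}$ with points $W=(W_i)_{i\in I}$; for $W_0\in\mathcal{W}$, $W_{0k}\in\mathcal{S}$ denotes its $k$-th block and $W_{0k,j}$ its $j$-th entry. Given distance vectors $D_i\in\mathbb{R}^{|J|}$ and $\rho>0$, $L_i(W_i)=\frac{W_i e^{-D_i/\rho}}{\langle W_i,e^{-D_i/\rho}\rangle}$; the geometric mean is $\mathcal{G}^w_i(W)=\exp_{W_i}\Big(\log\frac{\prod_{k\in\mathcal{N}_i}W_k^{w_{ik}}}{W_i}\Big)$; the similarity vectors are $S_i(W)=\mathcal{G}^w_i(L(W))$ where $L(W)=(L_i(W_i))_{i\in I}$. *)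

theory Defs
  imports "HOL-Analysis.Analysis"
begin

text \<open>Labels J: finite type 'j; vectors in R^|J| are real^'j.
  Nodes I: finite type 'i; points of W = S^|I| (and of the ambient R^{|I||J|})
  are real^'j^'i, block i being W$i.\<close>

definition simplex_pt :: "real^'j \<Rightarrow> bool" where
  "simplex_pt p \<longleftrightarrow> (\<forall>j. p$j > 0) \<and> (\<Sum>j\<in>UNIV. p$j) = 1"

definition T0 :: "real^'j \<Rightarrow> bool" where
  "T0 v \<longleftrightarrow> (\<Sum>j\<in>UNIV. v$j) = 0"

definition Pi_p :: "real^'j \<Rightarrow> real^'j \<Rightarrow> real^'j" where
  "Pi_p p z = (\<chi> j. p$j * z$j - p$j * (\<Sum>l\<in>UNIV. p$l * z$l))"

definition exp_p :: "real^'j \<Rightarrow> real^'j \<Rightarrow> real^'j" where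
  "exp_p p z = (\<chi> j. p$j * exp (z$j) / (\<Sum>l\<in>UNIV. p$l * exp (z$l)))"

definition lik :: "real^'j \<Rightarrow> real \<Rightarrow> real^'j \<Rightarrow> real^'j" where
  "lik Di \<rho> Wi = (\<chi> j. Wi$j * exp (- Di$j / \<rho>) / (\<Sum>l\<in>UNIV. Wi$l * exp (- Di$l / \<rho>)))"

definition geo_mean :: "('i \<Rightarrow> 'i set) \<Rightarrow> ('i \<Rightarrow> 'i \<Rightarrow> real) \<Rightarrow> real^'j^'i \<Rightarrow> 'i \<Rightarrow> real^'j" where
  "geo_mean N w W i =
     exp_p (W$i) (\<chi> j. ln ((\<Prod>k\<in>N i. (W$k$j) powr (w i k)) / W$i$j))"

definition simil :: "('i \<Rightarrow> 'i set) \<Rightarrow> ('i \<Rightarrow> 'i \<Rightarrow> real) \<Rightarrow> real^'j^'i \<Rightarrow> real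
      \<Rightarrow> real^'j^'i \<Rightarrow> real^'j^'i" where
  "simil N w D \<rho> W = (\<chi> i. geo_mean N w (\<chi> k. lik (D$k) \<rho> (W$k)) i)"

definition jac_block :: "('i \<Rightarrow> 'i set) \<Rightarrow> ('i \<Rightarrow> 'i \<Rightarrow> real) \<Rightarrow> real^'j^'i \<Rightarrow> real
      \<Rightarrow> real^'j^'i \<Rightarrow> 'i \<Rightarrow> 'i \<Rightarrow> 'j \<Rightarrow> 'j \<Rightarrow> real" where
  "jac_block N w D \<rho> W0 i k j l =
     (let s = simil N w D \<rho> W0 $ i in
      if k \<in> N i then
        w i k * (if j = l then (1 - s$j) * s$j / W0$k$j else - s$j * s$l / W0$k$l)
      else 0)"

end

theory Submission
  imports Defs
begin

lemma has_derivative_vecI: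
  fixes f :: "'a::euclidean_space \<Rightarrow> 'b::real_normed_vector^'n"
  assumes "\<And>i. ((\<lambda>x. f x $ i) has_derivative (\<lambda>h. f' h $ i)) (at x within s)"
  shows "(f has_derivative f') (at x within s)"
proof -
  have lin: "linear f'"
  proof (rule linearI)
    fix a b
    have L: "\<And>i. linear (\<lambda>h. f' h $ i)"
      using assms[THEN has_derivative_bounded_linear, THEN bounded_linear.linear] by blast
    show "f' (a + b) = f' a + f' b"
      unfolding vec_eq_iff using linear_add[OF L] by simp
  next
    fix r a
    have L: "\<And>i. linear (\<lambda>h. f' h $ i)"
      using assms[THEN has_derivative_bounded_linear, THEN bounded_linear.linear] by blast
    show "f' (r *\<^sub>R a) = r *\<^sub>R f' a"
      unfolding vec_eq_iff using linear_scale[OF L] by simp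
  qed
  have bl: "bounded_linear f'" using lin linear_conv_bounded_linear by blast
  have "((\<lambda>y. ((f y - f x) - f' (y - x)) /\<^sub>R norm (y - x)) \<longlongrightarrow> 0) (at x within s)"
  proof (rule vec_tendstoI)
    fix i
    from assms[of i] have "((\<lambda>y. ((f y $ i - f x $ i) - f' (y - x) $ i) /\<^sub>R norm (y - x)) \<longlongrightarrow> 0) (at x within s)"
      unfolding has_derivative_at_within by blast
    then show "((\<lambda>y. (((f y - f x) - f' (y - x)) /\<^sub>R norm (y - x)) $ i) \<longlongrightarrow> 0 $ i) (at x within s)"
      by simp
  qed
  then show ?thesis using bl unfolding has_derivative_at_within by blast
qed

lemma hd_nth2[derivative_intros]:
  "((\<lambda>x::real^'j::finite^'i::finite. x$k$j) has_derivative (\<lambda>h. h$k$j)) F"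
  by (rule bounded_linear_imp_has_derivative,
      rule bounded_linear_compose[OF bounded_linear_vec_nth bounded_linear_vec_nth])

lemma d_exp_sum:
  fixes W0 :: "real^'j::finite^'i::finite"
  assumes "\<And>k j. W0$k$j > 0"
  shows "((\<lambda>W. exp (\<Sum>k\<in>A. c k * (ln (W$k$j) + d k))) has_derivative (\<lambda>V. exp (\<Sum>k\<in>A. c k * (ln (W0$k$j) + d k)) * (\<Sum>k\<in>A. c k * (V$k$j / W0$k$j)))) (at W0)"
  by (rule derivative_eq_intros refl | simp add: assms)+
     (auto simp: divide_inverse mult_ac)

theorem proposition4p4:
  fixes E :: "'i::finite \<Rightarrow> 'i \<Rightarrow> bool"
    and w :: "'i \<Rightarrow> 'i \<Rightarrow> real"
    and D :: "real^'j::finite^'i"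
    and \<rho> :: real
    and W0 :: "real^'j^'i"
  defines "N \<equiv> (\<lambda>i. {k. E i k})"
  assumes sym: "\<And>i k. E i k \<Longrightarrow> E k i"
    and wpos: "\<And>i k. k \<in> N i \<Longrightarrow> w i k > 0"
    and wsum: "\<And>i. (\<Sum>k\<in>N i. w i k) = 1"
    and rho: "\<rho> > 0"
    and W0: "\<And>i. simplex_pt (W0$i)"
  shows "(simil N w D \<rho> has_derivative
            (\<lambda>V. \<chi> i j. \<Sum>k\<in>UNIV. \<Sum>l\<in>UNIV. jac_block N w D \<rho> W0 i k j l * V$k$l)) (at W0)
    \<and> (\<forall>i k (V::real^'j). k \<in> N i \<longrightarrow> T0 V \<longrightarrow>
          (\<chi> j. \<Sum>l\<in>UNIV. jac_block N w D \<rho> W0 i k j l * V$l)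
            = w i k *\<^sub>R Pi_p (simil N w D \<rho> W0 $ i) (\<chi> j. V$j / W0$k$j))
    \<and> (\<forall>i k (V::real^'j). k \<notin> N i \<longrightarrow>
          (\<chi> j. \<Sum>l\<in>UNIV. jac_block N w D \<rho> W0 i k j l * V$l) = 0)"
proof -
  define c where "c k j = - D$k$j / \<rho>" for k j
  define a where "a W i j = (\<Sum>k\<in>N i. w i k * (ln (W$k$j) + c k j))"
    for W :: "real^'j^'i" and i j
  define F where "F W i j = exp (a W i j) / (\<Sum>l\<in>UNIV. exp (a W i l))" for W i j
  have W0pos: "\<And>k j. W0$k$j > 0" using W0 by (simp add: simplex_pt_def)
  have eqF: "simil N w D \<rho> W $ i $ j = F W i j" if pos: "\<And>k j. W$k$j > 0" for W i j
  proof -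
    define Z where "Z k = (\<Sum>l\<in>UNIV. W$k$l * exp (- D$k$l / \<rho>))" for k
    have Zpos: "Z k > 0" for k unfolding Z_def by (rule sum_pos) (auto simp: pos)
    define L where "L k j = W$k$j * exp (- D$k$j/\<rho>) / Z k" for k j
    have Lpos: "L k j > 0" for k j unfolding L_def using pos Zpos by simp
    have lik_eq: "(\<chi> k. lik (D$k) \<rho> (W$k)) = (\<chi> k j. L k j)"
      unfolding lik_def L_def Z_def by (simp add: vec_eq_iff)
    define P where "P j = (\<Prod>k\<in>N i. L k j powr w i k)" for j
    have Ppos: "P j > 0" for j unfolding P_def by (rule prod_pos) (simp add: Lpos less_imp_neq[OF Lpos, symmetric])
    have LP: "L i l * exp (ln (P l / L i l)) = P l" for l
      using Lpos[of i l] Ppos[of l] by simp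
    have s1: "simil N w D \<rho> W $ i $ j = P j / (\<Sum>l\<in>UNIV. P l)"
      unfolding simil_def geo_mean_def exp_p_def lik_eq
      by (simp add: LP P_def[symmetric])
    define C where "C = (\<Sum>k\<in>N i. w i k * ln (Z k))"
    have P_eq: "P j = exp (a W i j) / exp C" for j
    proof -
      have "P j = (\<Prod>k\<in>N i. exp (w i k * ln (L k j)))"
        unfolding P_def by (simp add: powr_def less_imp_neq[OF Lpos, symmetric])
      also have "\<dots> = exp (\<Sum>k\<in>N i. w i k * ln (L k j))" by (simp add: exp_sum)
      also have "(\<Sum>k\<in>N i. w i k * ln (L k j)) = (\<Sum>k\<in>N i. w i k * (ln (W$k$j) + c k j) - w i k * ln (Z k))"
        by (rule sum.cong) (use pos Zpos in \<open>simp_all add: L_def c_def ln_div ln_mult algebra_simps less_imp_neq[OF pos, symmetric] less_imp_neq[OF Zpos, symmetric]\<close>)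
      also have "\<dots> = a W i j - C" by (simp add: a_def C_def sum_subtractf)
      finally show ?thesis by (simp add: exp_diff)
    qed
    show ?thesis unfolding s1 F_def P_eq
      by (simp add: sum_divide_distrib[symmetric])
  qed
  define s where "s i j = F W0 i j" for i j
  have s_eq: "simil N w D \<rho> W0 $ i $ j = s i j" for i j using eqF[OF W0pos] s_def by simp
  define da where "da i j V = (\<Sum>k\<in>N i. w i k * (V$k$j / W0$k$j))" for i j and V :: "real^'j^'i"
  have dF: "((\<lambda>W. F W i j) has_derivative (\<lambda>V. s i j * da i j V - s i j * (\<Sum>l\<in>UNIV. s i l * da i l V))) (at W0)" for i j
  proof -
    have de: "((\<lambda>W. exp (a W i l)) has_derivative (\<lambda>V. exp (a W0 i l) * da i l V)) (at W0)" for l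
      unfolding a_def da_def by (rule d_exp_sum[OF W0pos])
    have dsum: "((\<lambda>W. \<Sum>l\<in>UNIV. exp (a W i l)) has_derivative (\<lambda>V. \<Sum>l\<in>UNIV. exp (a W0 i l) * da i l V)) (at W0)"
      by (rule has_derivative_sum) (rule de)
    define T where "T = (\<Sum>l\<in>UNIV. exp (a W0 i l))"
    have Tpos: "T > 0" unfolding T_def by (rule sum_pos) auto
    have sT: "s i l = exp (a W0 i l) / T" for l by (simp add: s_def F_def T_def)
    have sumT: "(\<Sum>l\<in>UNIV. s i l * da i l V) = (\<Sum>l\<in>UNIV. exp (a W0 i l) * da i l V) / T" for V
      by (simp add: sT sum_divide_distrib)
    show ?thesis
      unfolding F_def
      apply (rule has_derivative_eq_rhs[OF has_derivative_divide[OF de dsum]])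
      using Tpos apply (simp add: T_def[symmetric])
      apply (rule ext)
      apply (subst sumT)
      apply (simp only: sT T_def[symmetric])
      using Tpos by (simp add: field_simps power2_eq_square)
  qed
  have jac: "jac_block N w D \<rho> W0 i k j l = (if k \<in> N i then w i k * (if j = l then s i j / W0$k$l else 0) - w i k * s i j * (s i l / W0$k$l) else 0)" for i k j l
    by (simp add: jac_block_def Let_def s_eq algebra_simps diff_divide_distrib)
  have row: "(\<Sum>l\<in>UNIV. jac_block N w D \<rho> W0 i k j l * V$l) = w i k * (s i j * (V$j / W0$k$j)) - w i k * s i j * (\<Sum>l\<in>UNIV. s i l * (V$l / W0$k$l))"
    if "k \<in> N i" for i k j and V :: "real^'j"
  proof -
    have "(\<Sum>l\<in>UNIV. jac_block N w D \<rho> W0 i k j l * V$l)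
       = (\<Sum>l\<in>UNIV. (if j = l then w i k * (s i j * (V$l / W0$k$l)) else 0) - w i k * s i j * (s i l * (V$l / W0$k$l)))"
      by (rule sum.cong) (auto simp: jac that algebra_simps)
    also have "\<dots> = w i k * (s i j * (V$j / W0$k$j)) - w i k * s i j * (\<Sum>l\<in>UNIV. s i l * (V$l / W0$k$l))"
      by (simp add: sum_subtractf sum_distrib_left)
    finally show ?thesis .
  qed
  have part2: "\<forall>i k (V::real^'j). k \<in> N i \<longrightarrow> T0 V \<longrightarrow>
          (\<chi> j. \<Sum>l\<in>UNIV. jac_block N w D \<rho> W0 i k j l * V$l)
            = w i k *\<^sub>R Pi_p (simil N w D \<rho> W0 $ i) (\<chi> j. V$j / W0$k$j)"
  proof (intro allI impI)
    fix i k and V :: "real^'j" assume k: "k \<in> N i"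
    show "(\<chi> j. \<Sum>l\<in>UNIV. jac_block N w D \<rho> W0 i k j l * V$l)
            = w i k *\<^sub>R Pi_p (simil N w D \<rho> W0 $ i) (\<chi> j. V$j / W0$k$j)"
      unfolding vec_eq_iff Pi_p_def using row[OF k]
      by (simp add: s_eq algebra_simps sum_distrib_left)
  qed
  have part3: "\<forall>i k (V::real^'j). k \<notin> N i \<longrightarrow>
          (\<chi> j. \<Sum>l\<in>UNIV. jac_block N w D \<rho> W0 i k j l * V$l) = 0"
    by (auto simp: vec_eq_iff jac)
  have dFv: "((\<lambda>W. \<chi> i j. F W i j) has_derivative (\<lambda>V. \<chi> i j. s i j * da i j V - s i j * (\<Sum>l\<in>UNIV. s i l * da i l V))) (at W0)"
    by (rule has_derivative_vecI, simp, rule has_derivative_vecI, simp, rule dF)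
  have ev1: "eventually (\<lambda>W. W$k$j > 0) (at W0)" for k j
  proof -
    have "((\<lambda>W::real^'j^'i. W$k$j) \<longlongrightarrow> W0$k$j) (at W0)"
      by (intro tendsto_intros)
    from order_tendstoD(1)[OF this W0pos] show ?thesis .
  qed
  have ev: "eventually (\<lambda>W. \<forall>k j. W$k$j > 0) (at W0)"
    by (intro eventually_all_finite ev1)
  have dS: "(simil N w D \<rho> has_derivative (\<lambda>V. \<chi> i j. s i j * da i j V - s i j * (\<Sum>l\<in>UNIV. s i l * da i l V))) (at W0)"
  proof (rule has_derivative_transform_eventually[OF dFv])
    show "\<forall>\<^sub>F x' in at W0. (\<chi> i j. F x' i j) = simil N w D \<rho> x'"
      using ev by eventually_elim (simp add: vec_eq_iff eqF)
    show "(\<chi> i j. F W0 i j) = simil N w D \<rho> W0"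
      by (simp add: vec_eq_iff eqF W0pos)
  qed simp
  have deq: "(\<lambda>V. \<chi> i j. s i j * da i j V - s i j * (\<Sum>l\<in>UNIV. s i l * da i l V))
     = (\<lambda>V. \<chi> i j. \<Sum>k\<in>UNIV. \<Sum>l\<in>UNIV. jac_block N w D \<rho> W0 i k j l * V$k$l)"
  proof (rule ext, unfold vec_eq_iff, intro allI)
    fix V :: "real^'j^'i" and i j
    have "(\<Sum>k\<in>UNIV. \<Sum>l\<in>UNIV. jac_block N w D \<rho> W0 i k j l * V$k$l)
        = (\<Sum>k\<in>UNIV. if k \<in> N i then w i k * (s i j * (V$k$j / W0$k$j)) - w i k * s i j * (\<Sum>l\<in>UNIV. s i l * (V$k$l / W0$k$l)) else 0)"
    proof (rule sum.cong[OF refl])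
      fix k
      show "(\<Sum>l\<in>UNIV. jac_block N w D \<rho> W0 i k j l * V$k$l)
        = (if k \<in> N i then w i k * (s i j * (V$k$j / W0$k$j)) - w i k * s i j * (\<Sum>l\<in>UNIV. s i l * (V$k$l / W0$k$l)) else 0)"
      proof (cases "k \<in> N i")
        case True then show ?thesis using row[OF True, of j "V$k"] by simp
      next
        case False then show ?thesis by (simp add: jac)
      qed
    qed
    also have "\<dots> = (\<Sum>k\<in>N i. w i k * (s i j * (V$k$j / W0$k$j)) - w i k * s i j * (\<Sum>l\<in>UNIV. s i l * (V$k$l / W0$k$l)))"
      by (simp add: sum.If_cases)
    also have "\<dots> = s i j * da i j V - s i j * (\<Sum>l\<in>UNIV. s i l * da i l V)"
      unfolding da_def
      by (simp add: sum_subtractf sum_distrib_left sum.swap[of _ "N i"] algebra_simps)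
    finally show "(\<chi> i j. s i j * da i j V - s i j * (\<Sum>l\<in>UNIV. s i l * da i l V)) $ i $ j
       = (\<chi> i j. \<Sum>k\<in>UNIV. \<Sum>l\<in>UNIV. jac_block N w D \<rho> W0 i k j l * V$k$l) $ i $ j"
      by simp
  qed
  show ?thesis using dS[unfolded deq] part2 part3 by blast
qed

end
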